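(* Let $W$ be a finite set of possible worlds, let $G=(2^W,\gg)$ be a belief algebra on $W$, let $\Omega\subseteq\gg$, and let $\mathcal{A}$ be the set of all belief algebras on $W$ that contain $\Omega$. Then $\operatorname{Gen}(\Omega)$ is a belief algebra, and $\operatorname{Gen}(\Omega)=\bigcap\mathcal{A}$.
   Context: $R_W=\{(U,V)\mid U,V\subseteq W,\ U\cap V=\varnothing\}$. A belief algebra on $W$ is a pair $(2^W,\gg)$, $\gg$ a binary relation on $2^W$, such that for all $U,V,U_1,V_1,U_2,V_2\subseteq W$: (A0) $\gg\subseteq R_W$; (A1) $U\gg\varnothing$ iff $U\neq\varnothing$; (A2) if $U\gg V$ then not $V\gg U$; (A3) if $U_1\supseteq U$, $U\gg V$, $V\supseteq V_1$ and $U_1\cap V_1=\varnothing$, then $U_1\gg V_1$; (A4) if $U=U_1\cup V_1=U_2\cup V_2$, $U_1\gg V_1$ and $U_2\gg V_2$, then $U_1\cap U_2\gg V_1\cup V_2$. A belief algebra is identified with its relation $\gg$ as a set of pairs; "contains $\Omega$" means $\Omega\subseteq\gg$, and $\bigcap\mathcal{A}$ is the intersection of these sets of pairs. For $\Omega\subseteq R_W$, $\operatorname{Gen}(\Omega)$ is the smallest subset of $R_W$ that contains $\Omega$, contains $(U,\varnothing)$ for every nonempty $U\subseteq W$, and is closed under: if $(U,V)$ is in it, $U\subseteq U_1$, $V_1\subseteq V$ and $U_1\cap V_1=\varnothing$, then $(U_1,V_1)$ is in it; if $U_1\cup V_1=U_2\cup V_2$ and $(U_1,V_1),(U_2,V_2)$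 are in it, then $(U_1\cap U_2,V_1\cup V_2)$ is in it. *)

theory Defs
  imports Main
begin

definition RW :: "'a set \<Rightarrow> ('a set \<times> 'a set) set" where
  "RW W = {(U, V). U \<subseteq> W \<and> V \<subseteq> W \<and> U \<inter> V = {}}"

definition belief_algebra :: "'a set \<Rightarrow> ('a set \<times> 'a set) set \<Rightarrow> bool" where
  "belief_algebra W R \<longleftrightarrow>
     R \<subseteq> RW W \<and>
     (\<forall>U. U \<subseteq> W \<longrightarrow> ((U, {}) \<in> R \<longleftrightarrow> U \<noteq> {})) \<and>
     (\<forall>U V. U \<subseteq> W \<longrightarrow> V \<subseteq> W \<longrightarrow> (U, V) \<in> R \<longrightarrow> (V, U) \<notin> R) \<and>
     (\<forall>U V U1 V1. U \<subseteq> W \<longrightarrow> V \<subseteq> W \<longrightarrow> U1 \<subseteq> W \<longrightarrow> V1 \<subseteq> W \<longrightarrow>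
        U \<subseteq> U1 \<longrightarrow> (U, V) \<in> R \<longrightarrow> V1 \<subseteq> V \<longrightarrow> U1 \<inter> V1 = {} \<longrightarrow> (U1, V1) \<in> R) \<and>
     (\<forall>U U1 V1 U2 V2. U \<subseteq> W \<longrightarrow> U1 \<subseteq> W \<longrightarrow> V1 \<subseteq> W \<longrightarrow> U2 \<subseteq> W \<longrightarrow> V2 \<subseteq> W \<longrightarrow>
        U = U1 \<union> V1 \<longrightarrow> U = U2 \<union> V2 \<longrightarrow> (U1, V1) \<in> R \<longrightarrow> (U2, V2) \<in> R \<longrightarrow>
        (U1 \<inter> U2, V1 \<union> V2) \<in> R)"

inductive_set Gen :: "'a set \<Rightarrow> ('a set \<times> 'a set) set \<Rightarrow> ('a set \<times> 'a set) set"
  for W :: "'a set" and \<Omega> :: "('a set \<times> 'a set) set" where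
  base: "p \<in> \<Omega> \<Longrightarrow> p \<in> RW W \<Longrightarrow> p \<in> Gen W \<Omega>"
| empty: "U \<subseteq> W \<Longrightarrow> U \<noteq> {} \<Longrightarrow> (U, {}) \<in> Gen W \<Omega>"
| mono: "(U, V) \<in> Gen W \<Omega> \<Longrightarrow> U \<subseteq> U1 \<Longrightarrow> U1 \<subseteq> W \<Longrightarrow> V1 \<subseteq> V \<Longrightarrow> U1 \<inter> V1 = {}
          \<Longrightarrow> (U1, V1) \<in> Gen W \<Omega>"
| inter: "U1 \<union> V1 = U2 \<union> V2 \<Longrightarrow> (U1, V1) \<in> Gen W \<Omega> \<Longrightarrow> (U2, V2) \<in> Gen W \<Omega>
          \<Longrightarrow> (U1 \<inter> U2, V1 \<union> V2) \<in> Gen W \<Omega>"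

end

theory Submission
  imports Defs
begin


lemma ba_RW: "belief_algebra W R \<Longrightarrow> R \<subseteq> RW W"
  unfolding belief_algebra_def by (elim conjE)

lemma ba_A1:
  assumes "belief_algebra W R" and "U \<subseteq> W"
  shows "(U, {}) \<in> R \<longleftrightarrow> U \<noteq> {}"
proof -
  have "\<forall>U. U \<subseteq> W \<longrightarrow> ((U, {}) \<in> R \<longleftrightarrow> U \<noteq> {})" using assms(1) unfolding belief_algebra_def by (elim conjE) assumption
  then show ?thesis using assms by blast
qed

lemma ba_A2:
  assumes "belief_algebra W R" and "U \<subseteq> W" and "V \<subseteq> W" and "(U, V) \<in> R"
  shows "(V, U) \<notin> R"
proof -
  have "\<forall>U V. U \<subseteq> W \<longrightarrow> V \<subseteq> W \<longrightarrow> (U, V) \<in> R \<longrightarrow> (V, U) \<notin> R" using assms(1) unfolding belief_algebra_def by (elim conjE) assumption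
  then show ?thesis using assms by blast
qed

lemma ba_A3:
  assumes "belief_algebra W R" and "U \<subseteq> W" and "V \<subseteq> W" and "U1 \<subseteq> W" and "V1 \<subseteq> W" and "U \<subseteq> U1" and "(U, V) \<in> R" and "V1 \<subseteq> V" and "U1 \<inter> V1 = {}"
  shows "(U1, V1) \<in> R"
proof -
  have "\<forall>U V U1 V1. U \<subseteq> W \<longrightarrow> V \<subseteq> W \<longrightarrow> U1 \<subseteq> W \<longrightarrow> V1 \<subseteq> W \<longrightarrow> U \<subseteq> U1 \<longrightarrow> (U, V) \<in> R \<longrightarrow> V1 \<subseteq> V \<longrightarrow> U1 \<inter> V1 = {} \<longrightarrow> (U1, V1) \<in> R" using assms(1) unfolding belief_algebra_def by (elim conjE) assumption
  then show ?thesis using assms by blast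
qed

lemma ba_A4:
  assumes "belief_algebra W R" and "U1 \<union> V1 \<subseteq> W" and "U1 \<subseteq> W" and "V1 \<subseteq> W" and "U2 \<subseteq> W" and "V2 \<subseteq> W" and "U1 \<union> V1 = U2 \<union> V2" and "(U1, V1) \<in> R" and "(U2, V2) \<in> R"
  shows "(U1 \<inter> U2, V1 \<union> V2) \<in> R"
proof -
  have "\<forall>U U1 V1 U2 V2. U \<subseteq> W \<longrightarrow> U1 \<subseteq> W \<longrightarrow> V1 \<subseteq> W \<longrightarrow> U2 \<subseteq> W \<longrightarrow> V2 \<subseteq> W \<longrightarrow> U = U1 \<union> V1 \<longrightarrow> U = U2 \<union> V2 \<longrightarrow> (U1, V1) \<in> R \<longrightarrow> (U2, V2) \<in> R \<longrightarrow> (U1 \<inter> U2, V1 \<union> V2) \<in> R" using assms(1) unfolding belief_algebra_def by (elim conjE) assumption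
  then show ?thesis using assms by blast
qed

lemma Gen_RW: "x \<in> Gen W \<Omega> \<Longrightarrow> x \<in> RW W"
proof (induction rule: Gen.induct)
  case (inter U1 V1 U2 V2)
  then show ?case unfolding RW_def by auto
qed (auto simp: RW_def)

lemma Gen_sub:
  assumes R: "belief_algebra W R" and O: "\<Omega> \<subseteq> R"
  shows "x \<in> Gen W \<Omega> \<Longrightarrow> x \<in> R"
proof (induction rule: Gen.induct)
  case (base p)
  then show ?case using O by auto
next
  case (empty U)
  then show ?case using ba_A1[OF R] by blast
next
  case (mono U V U1 V1)
  have "(U, V) \<in> RW W" using mono.hyps(1) by (rule Gen_RW)
  then have s: "U \<subseteq> W" "V \<subseteq> W" by (auto simp: RW_def)
  moreover have "V1 \<subseteq> W" using mono.hyps(4) s(2) by (rule order_trans)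
  ultimately show ?case using ba_A3[OF R] mono.IH mono.hyps by blast
next
  case (inter U1 V1 U2 V2)
  have "(U1, V1) \<in> RW W" "(U2, V2) \<in> RW W" using inter.hyps(2,3) by (auto intro: Gen_RW)
  then have s: "U1 \<subseteq> W" "V1 \<subseteq> W" "U2 \<subseteq> W" "V2 \<subseteq> W" by (auto simp: RW_def)
  then have "U1 \<union> V1 \<subseteq> W" by auto
  then show ?case using ba_A4[OF R _ s inter.hyps(1) inter.IH] by blast
qed

theorem corollary2:
  fixes W :: "'a set" and G \<Omega> :: "('a set \<times> 'a set) set"
  assumes "finite W"
    and "belief_algebra W G"
    and "\<Omega> \<subseteq> G"
  shows "belief_algebra W (Gen W \<Omega>)
     \<and> Gen W \<Omega> = \<Inter> {R. belief_algebra W R \<and> \<Omega> \<subseteq> R}"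
proof -
  have GG: "Gen W \<Omega> \<subseteq> G" using Gen_sub[OF assms(2,3)] by blast
  have ORW: "\<Omega> \<subseteq> RW W" using ba_RW[OF assms(2)] assms(3) by blast
  have A0: "Gen W \<Omega> \<subseteq> RW W" using Gen_RW by blast
  have A1: "\<forall>U. U \<subseteq> W \<longrightarrow> ((U, {}) \<in> Gen W \<Omega> \<longleftrightarrow> U \<noteq> {})"
  proof (intro allI impI iffI)
    fix U assume "U \<subseteq> W" "(U, {}) \<in> Gen W \<Omega>"
    then show "U \<noteq> {}" using GG ba_A1[OF assms(2)] by blast
  qed (rule Gen.empty)
  have A2: "\<forall>U V. U \<subseteq> W \<longrightarrow> V \<subseteq> W \<longrightarrow> (U, V) \<in> Gen W \<Omega> \<longrightarrow> (V, U) \<notin> Gen W \<Omega>"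
    using GG ba_A2[OF assms(2)] by blast
  have A3: "\<forall>U V U1 V1. U \<subseteq> W \<longrightarrow> V \<subseteq> W \<longrightarrow> U1 \<subseteq> W \<longrightarrow> V1 \<subseteq> W \<longrightarrow>
        U \<subseteq> U1 \<longrightarrow> (U, V) \<in> Gen W \<Omega> \<longrightarrow> V1 \<subseteq> V \<longrightarrow> U1 \<inter> V1 = {} \<longrightarrow> (U1, V1) \<in> Gen W \<Omega>"
    by (blast intro: Gen.mono)
  have A4: "\<forall>U U1 V1 U2 V2. U \<subseteq> W \<longrightarrow> U1 \<subseteq> W \<longrightarrow> V1 \<subseteq> W \<longrightarrow> U2 \<subseteq> W \<longrightarrow> V2 \<subseteq> W \<longrightarrow>
        U = U1 \<union> V1 \<longrightarrow> U = U2 \<union> V2 \<longrightarrow> (U1, V1) \<in> Gen W \<Omega> \<longrightarrow> (U2, V2) \<in> Gen W \<Omega> \<longrightarrow>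
        (U1 \<inter> U2, V1 \<union> V2) \<in> Gen W \<Omega>"
    by (intro allI impI, rule Gen.inter) simp_all
  have BA: "belief_algebra W (Gen W \<Omega>)"
    unfolding belief_algebra_def using A0 A1 A2 A3 A4 by (intro conjI)
  have OG: "\<Omega> \<subseteq> Gen W \<Omega>" using ORW by (auto intro: Gen.base)
  have "Gen W \<Omega> = \<Inter> {R. belief_algebra W R \<and> \<Omega> \<subseteq> R}"
  proof
    show "Gen W \<Omega> \<subseteq> \<Inter> {R. belief_algebra W R \<and> \<Omega> \<subseteq> R}"
      using Gen_sub by blast
    show "\<Inter> {R. belief_algebra W R \<and> \<Omega> \<subseteq> R} \<subseteq> Gen W \<Omega>"
      using BA OG by blast
  qed
  with BA show ?thesis by blast
qed

end
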